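(* Let $F:\mathbb{R}^n\to\mathbb{R}$ be a ReLU neural network function, let $C$ be a flat $n$-cell of $\mathcal{C}(F)$, and let $C'$ be an $n$-cell of $\mathcal{C}(F)$ such that $C\cap C'$ is a common $(n-1)$-dimensional face $D$. Let $E_1,E_2$ be $1$-cells of $C'$, neither contained in $C$, each having an endpoint in $C$. Then $E_1$ and $E_2$ receive the same $\nabla F$-orientation: both point away from $C$, both point toward $C$, or both are unoriented (flat).
   Context: A ReLU neural network function is $F=A_{m+1}\circ\sigma\circ A_m\circ\cdots\circ\sigma\circ A_1$ with affine $A_i$ and coordinatewise ReLU $\sigma$. Its canonical polyhedral complex $\mathcal{C}(F)$ is the polyhedral decomposition of the input space whose cells are the closures of the nonempty sets on which the sign vector of all pre-activations is constant; $F$ is affine on each cell. A cell is flat if $F$ is constant on it. $\nabla F$-orientation: a $1$-cell on which $F$ is nonconstant is oriented in the direction of increasing $F$; flat $1$-cells are unoriented. *)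

theory Defs
  imports "HOL-Analysis.Analysis"
begin

text \<open>First layer A_1: list of neurons (a, c), pre-activation a \<bullet> x + c.
  Further hidden layers A_2 .. A_m: lists of neurons (w, c) acting on the
  previous post-activation vector (a real list).  Output layer A_{m+1}: a single
  neuron (w, c).  F = A_{m+1} o sigma o A_m o ... o sigma o A_1.\<close>

type_synonym 'n relu_net =
  "((real^'n) \<times> real) list \<times> (real list \<times> real) list list \<times> (real list \<times> real)"

definition relu :: "real \<Rightarrow> real" where
  "relu t = max 0 t"

definition neuron :: "real list \<times> real \<Rightarrow> real list \<Rightarrow> real" where
  "neuron wc v = sum_list (map2 (*) (fst wc) v) + snd wc"

definition apply_layer :: "(real list \<times> real) list \<Rightarrow> real list \<Rightarrow> real list" where
  "apply_layer H v = map (\<lambda>wc. neuron wc v) H"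

fun wf_layers :: "nat \<Rightarrow> (real list \<times> real) list list \<Rightarrow> real list \<times> real \<Rightarrow> bool" where
  "wf_layers d [] out = (length (fst out) = d)"
| "wf_layers d (H # Hs) out =
     ((\<forall>wc\<in>set H. length (fst wc) = d) \<and> wf_layers (length H) Hs out)"

definition wf_net :: "'n relu_net \<Rightarrow> bool" where
  "wf_net N = wf_layers (length (fst N)) (fst (snd N)) (snd (snd N))"

fun preacts_from :: "(real list \<times> real) list list \<Rightarrow> real list \<Rightarrow> real list list" where
  "preacts_from [] z = []"
| "preacts_from (H # Hs) z =
     (let z' = apply_layer H (map relu z) in z' # preacts_from Hs z')"

definition first_pre :: "'n::finite relu_net \<Rightarrow> real^'n \<Rightarrow> real list" where
  "first_pre N x = map (\<lambda>(a, c). a \<bullet> x + c) (fst N)"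

definition layer_pres :: "'n::finite relu_net \<Rightarrow> real^'n \<Rightarrow> real list list" where
  "layer_pres N x = first_pre N x # preacts_from (fst (snd N)) (first_pre N x)"

definition all_pre :: "'n::finite relu_net \<Rightarrow> real^'n \<Rightarrow> real list" where
  "all_pre N x = concat (layer_pres N x)"

definition net_fun :: "'n::finite relu_net \<Rightarrow> real^'n \<Rightarrow> real" where
  "net_fun N x = neuron (snd (snd N)) (map relu (last (layer_pres N x)))"

definition sign_vector :: "'n::finite relu_net \<Rightarrow> real^'n \<Rightarrow> real list" where
  "sign_vector N x = map sgn (all_pre N x)"

text \<open>Cells of the canonical polyhedral complex C(F): closures of the nonempty
  sets on which the sign vector is constant.\<close>
definition cells :: "'n::finite relu_net \<Rightarrow> (real^'n) set set" where
  "cells N = {closure {x. sign_vector N x = s} | s. {x. sign_vector N x = s} \<noteq> {}}"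

definition flat_on :: "('a \<Rightarrow> real) \<Rightarrow> 'a set \<Rightarrow> bool" where
  "flat_on F S \<longleftrightarrow> (\<forall>x\<in>S. \<forall>y\<in>S. F x = F y)"

text \<open>Gradient orientation of a 1-cell E relative to its endpoint v:
  oriented away from v (F increases leaving v) or toward v (F decreases leaving v).\<close>
definition points_away :: "('a \<Rightarrow> real) \<Rightarrow> 'a set \<Rightarrow> 'a \<Rightarrow> bool" where
  "points_away F E v \<longleftrightarrow> (\<forall>y\<in>E. y \<noteq> v \<longrightarrow> F v < F y)"

definition points_toward :: "('a \<Rightarrow> real) \<Rightarrow> 'a set \<Rightarrow> 'a \<Rightarrow> bool" where
  "points_toward F E v \<longleftrightarrow> (\<forall>y\<in>E. y \<noteq> v \<longrightarrow> F y < F v)"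

end

theory Submission
  imports Defs
begin


lemma edge_strict:
  fixes C' D E :: "'a::euclidean_space set"
  assumes convC': "convex C'" and a: "a \<noteq> 0"
    and supp: "\<And>y. y \<in> C' \<Longrightarrow> a \<bullet> p \<le> a \<bullet> y"
    and DC': "D face_of C'" and Ddim: "aff_dim D = int DIM('a) - 1"
    and Dhyp: "\<And>y. y \<in> D \<Longrightarrow> a \<bullet> y = a \<bullet> p"
    and EC': "E face_of C'" and Edim: "aff_dim E = 1"
    and vE: "v \<in> E" and vD: "v \<in> D" and EnD: "\<not> E \<subseteq> D"
    and yE: "y \<in> E" and yv: "y \<noteq> v"
  shows "a \<bullet> p < a \<bullet> y"
proof (rule ccontr)
  assume "\<not> a \<bullet> p < a \<bullet> y"
  moreover have "E \<subseteq> C'" using EC' face_of_imp_subset by blast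
  ultimately have ay: "a \<bullet> y = a \<bullet> p" using supp yE by force
  define K where "K = C' \<inter> {x. a \<bullet> x = a \<bullet> p}"
  have Kf: "K face_of C'" unfolding K_def
    by (rule face_of_Int_supporting_hyperplane_ge[OF convC']) (use supp in auto)
  have DK: "D \<subseteq> K" using Dhyp face_of_imp_subset[OF DC'] unfolding K_def by auto
  have "aff_dim K \<le> aff_dim {x. a \<bullet> x = a \<bullet> p}"
    unfolding K_def by (rule aff_dim_subset) auto
  also have "\<dots> = int DIM('a) - 1" using a by simp
  finally have Kdim: "aff_dim K \<le> int DIM('a) - 1" .
  have KD: "K = D"
  proof (rule ccontr)
    assume "K \<noteq> D"
    hence "aff_dim D < aff_dim K"
      using face_of_aff_dim_lt[of K D] face_of_subset[OF DC' DK] Kf face_of_imp_convex[OF Kf]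
      by (metis face_of_imp_subset)
    thus False using Kdim Ddim by simp
  qed
  have EE: "E \<inter> {x. a \<bullet> x = a \<bullet> p} face_of E"
    by (rule face_of_Int_supporting_hyperplane_ge[OF face_of_imp_convex[OF EC']])
       (use supp \<open>E \<subseteq> C'\<close> in auto)
  have "E \<inter> {x. a \<bullet> x = a \<bullet> p} = E"
  proof (rule ccontr)
    assume ne: "E \<inter> {x. a \<bullet> x = a \<bullet> p} \<noteq> E"
    have "aff_dim (E \<inter> {x. a \<bullet> x = a \<bullet> p}) < aff_dim E"
      by (rule face_of_aff_dim_lt[OF face_of_imp_convex[OF EC'] EE ne])
    moreover have "aff_dim {v, y} \<le> aff_dim (E \<inter> {x. a \<bullet> x = a \<bullet> p})"
      by (rule aff_dim_subset) (use vE yE ay Dhyp vD in auto)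
    ultimately show False using yv Edim by auto
  qed
  hence "E \<subseteq> K" using \<open>E \<subseteq> C'\<close> unfolding K_def by blast
  thus False using KD EnD by simp
qed



lemma proportional:
  fixes D :: "'a::euclidean_space set"
  assumes a: "a \<noteq> 0" and pD: "p \<in> D" and Ddim: "aff_dim D = int DIM('a) - 1"
    and Da: "\<And>y. y \<in> D \<Longrightarrow> a \<bullet> y = a \<bullet> p"
    and Dg: "\<And>y. y \<in> D \<Longrightarrow> g \<bullet> y = g \<bullet> p"
  shows "\<exists>\<mu>. \<forall>x. g \<bullet> x = \<mu> * (a \<bullet> x)"
proof -
  define S where "S = span ((\<lambda>x. x - p) ` D)"
  have "aff_dim D = int (dim ((\<lambda>x. x - p) ` D))"
    by (rule aff_dim_eq_dim_subtract) (simp add: pD hull_inc)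
  hence dS: "dim S = DIM('a) - 1" using Ddim unfolding S_def by (simp add: dim_span)
  have ST: "S \<subseteq> {x. a \<bullet> x = 0}" unfolding S_def
    by (rule span_minimal) (auto simp: Da inner_diff_right subspace_hyperplane)
  have "S = {x. a \<bullet> x = 0}"
    by (rule subspace_dim_equal) (use ST dS dim_hyperplane[OF a] in \<open>auto simp: S_def subspace_hyperplane\<close>)
  moreover have "S \<subseteq> {x. g \<bullet> x = 0}" unfolding S_def
    by (rule span_minimal) (auto simp: Dg inner_diff_right subspace_hyperplane)
  ultimately have gz: "\<And>x. a \<bullet> x = 0 \<Longrightarrow> g \<bullet> x = 0" by blast
  have "g \<bullet> x = ((g \<bullet> a) / (a \<bullet> a)) * (a \<bullet> x)" for x
  proof -
    have "a \<bullet> (x - ((a \<bullet> x) / (a \<bullet> a)) *\<^sub>R a) = 0" using a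
      by (simp add: inner_diff_right)
    hence "g \<bullet> (x - ((a \<bullet> x) / (a \<bullet> a)) *\<^sub>R a) = 0" by (rule gz)
    thus ?thesis by (simp add: inner_diff_right algebra_simps)
  qed
  thus ?thesis by blast
qed



lemma geo_main:
  fixes F :: "'a::euclidean_space \<Rightarrow> real" and C C' D E1 E2 :: "'a set"
  assumes convC': "convex C'" and affF: "\<And>x. x \<in> C' \<Longrightarrow> F x = g \<bullet> x + b"
    and DC': "D face_of C'" and Ddim: "aff_dim D = int DIM('a) - 1"
    and C'dim: "aff_dim C' = int DIM('a)"
    and DC: "D \<subseteq> C" and flatD: "\<And>x y. x \<in> D \<Longrightarrow> y \<in> D \<Longrightarrow> F x = F y"
    and E1: "E1 face_of C'" "aff_dim E1 = 1" "\<not> E1 \<subseteq> C" "v1 \<in> E1" "v1 \<in> D"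
    and E2: "E2 face_of C'" "aff_dim E2 = 1" "\<not> E2 \<subseteq> C" "v2 \<in> E2" "v2 \<in> D"
  shows "(points_away F E1 v1 \<and> points_away F E2 v2)
       \<or> (points_toward F E1 v1 \<and> points_toward F E2 v2)
       \<or> (flat_on F E1 \<and> flat_on F E2)"
proof -
  have "aff_dim D \<noteq> -1" using Ddim DIM_positive[where 'a='a] by linarith
  hence Dne: "D \<noteq> {}" by (metis aff_dim_empty)
  have convD: "convex D" using face_of_imp_convex[OF DC'] .
  have "rel_interior D \<noteq> {}" using rel_interior_eq_empty[OF convD] Dne by simp
  then obtain p where pri: "p \<in> rel_interior D" by blast
  have pD: "p \<in> D" using pri rel_interior_subset by blast
  have DsC': "D \<subseteq> C'" using face_of_imp_subset[OF DC'] .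
  have "aff_dim D \<noteq> aff_dim C'" using Ddim C'dim by linarith
  hence "D \<noteq> C'" by metis
  hence "D \<inter> rel_interior C' = {}" by (rule face_of_disjoint_rel_interior[OF DC'])
  hence "p \<notin> rel_interior C'" using pD by blast
  moreover have pC': "p \<in> C'" using pD DsC' by blast
  ultimately obtain a where a: "a \<noteq> 0" and supp: "\<And>y. y \<in> C' \<Longrightarrow> a \<bullet> p \<le> a \<bullet> y"
    and "\<And>y. y \<in> rel_interior C' \<Longrightarrow> a \<bullet> p < a \<bullet> y"
    using supporting_hyperplane_rel_boundary[OF convC' pC'] by metis
  have Da: "a \<bullet> y = a \<bullet> p" if yD: "y \<in> D" for y
  proof -
    have "\<forall>x\<in>D. \<exists>e. e > 1 \<and> (1 - e) *\<^sub>R x + e *\<^sub>R p \<in> D"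
      using convex_rel_interior_iff[OF convD Dne, of p] pri by simp
    then obtain e where e: "e > 1" "(1 - e) *\<^sub>R y + e *\<^sub>R p \<in> D"
      using yD by blast
    have "a \<bullet> p \<le> a \<bullet> ((1 - e) *\<^sub>R y + e *\<^sub>R p)" by (rule supp) (use DsC' e(2) in blast)
    hence "a \<bullet> p \<le> (1 - e) * (a \<bullet> y) + e * (a \<bullet> p)" by (simp add: inner_add_right)
    hence "0 \<le> (1 - e) * (a \<bullet> y - a \<bullet> p)" by (simp add: algebra_simps)
    hence "a \<bullet> y - a \<bullet> p \<le> 0" using e(1)
      by (auto simp: zero_le_mult_iff)
    moreover have "a \<bullet> p \<le> a \<bullet> y" using supp DsC' yD by blast
    ultimately show ?thesis by simp
  qed
  have Dg: "g \<bullet> y = g \<bullet> p" if "y \<in> D" for y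
  proof -
    have "y \<in> C'" "p \<in> C'" using DsC' that pD by auto
    thus ?thesis using flatD[OF that pD] affF[of y] affF[of p] by simp
  qed
  obtain \<mu> where mu: "\<And>x. g \<bullet> x = \<mu> * (a \<bullet> x)"
    using proportional[OF a pD Ddim Da Dg] by blast
  have key: "F y - F v = \<mu> * (a \<bullet> y - a \<bullet> p) \<and> (y \<noteq> v \<longrightarrow> a \<bullet> p < a \<bullet> y)"
    if E: "E face_of C'" "aff_dim E = 1" "\<not> E \<subseteq> C" "v \<in> E" "v \<in> D" and yE: "y \<in> E"
    for E v y
  proof
    have EC': "E \<subseteq> C'" using face_of_imp_subset[OF E(1)] .
    have "F y - F v = g \<bullet> y - g \<bullet> v" using affF[of y] affF[of v] subsetD[OF EC' yE] subsetD[OF EC' E(4)] by simp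
    also have "\<dots> = \<mu> * (a \<bullet> y) - \<mu> * (a \<bullet> v)" using mu by simp
    also have "\<dots> = \<mu> * (a \<bullet> y - a \<bullet> p)" using Da[OF E(5)] by (simp add: algebra_simps)
    finally show "F y - F v = \<mu> * (a \<bullet> y - a \<bullet> p)" .
    show "y \<noteq> v \<longrightarrow> a \<bullet> p < a \<bullet> y"
    proof
      assume "y \<noteq> v"
      have "\<not> E \<subseteq> D" using E(3) DC by blast
      from edge_strict[OF convC' a supp DC' Ddim Da E(1,2,4,5) this yE \<open>y \<noteq> v\<close>]
      show "a \<bullet> p < a \<bullet> y" .
    qed
  qed
  have away: "points_away F E v" if "\<mu> > 0" "E face_of C'" "aff_dim E = 1" "\<not> E \<subseteq> C" "v \<in> E" "v \<in> D" for E v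
    unfolding points_away_def
  proof (intro ballI impI)
    fix y assume y: "y \<in> E" "y \<noteq> v"
    have k: "F y - F v = \<mu> * (a \<bullet> y - a \<bullet> p)" "a \<bullet> p < a \<bullet> y"
      using key[OF that(2-6) y(1)] y(2) by auto
    have "0 < \<mu> * (a \<bullet> y - a \<bullet> p)" using that(1) k(2) by simp
    thus "F v < F y" using k(1) by linarith
  qed
  have toward: "points_toward F E v" if "\<mu> < 0" "E face_of C'" "aff_dim E = 1" "\<not> E \<subseteq> C" "v \<in> E" "v \<in> D" for E v
    unfolding points_toward_def
  proof (intro ballI impI)
    fix y assume y: "y \<in> E" "y \<noteq> v"
    have k: "F y - F v = \<mu> * (a \<bullet> y - a \<bullet> p)" "a \<bullet> p < a \<bullet> y"
      using key[OF that(2-6) y(1)] y(2) by auto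
    have "\<mu> * (a \<bullet> y - a \<bullet> p) < 0" using that(1) k(2) by (simp add: mult_neg_pos)
    thus "F y < F v" using k(1) by linarith
  qed
  have flat: "flat_on F E" if "\<mu> = 0" "E face_of C'" "aff_dim E = 1" "\<not> E \<subseteq> C" "v \<in> E" "v \<in> D" for E v
    unfolding flat_on_def
  proof (intro ballI)
    fix x y assume xy: "x \<in> E" "y \<in> E"
    have "F x - F v = 0" "F y - F v = 0"
      using key[OF that(2-6) xy(1)] key[OF that(2-6) xy(2)] that(1) by auto
    thus "F x = F y" by linarith
  qed
  consider "\<mu> > 0" | "\<mu> < 0" | "\<mu> = 0" by linarith
  thus ?thesis
  proof cases
    case 1 thus ?thesis using away[OF 1 E1] away[OF 1 E2] by blast
  next
    case 2 thus ?thesis using toward[OF 2 E1] toward[OF 2 E2] by blast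
  next
    case 3 thus ?thesis using flat[OF 3 E1] flat[OF 3 E2] by blast
  qed
qed



definition aff :: "'a::real_inner \<Rightarrow> 'a \<times> real \<Rightarrow> real" where
  "aff x gb = fst gb \<bullet> x + snd gb"

fun relu_G :: "real list \<Rightarrow> ('a::real_inner \<times> real) list \<Rightarrow> ('a \<times> real) list" where
  "relu_G (s # ss) (g # gs) = (if s = 1 then g else (0, 0)) # relu_G ss gs"
| "relu_G _ _ = []"

lemma relu_G: "map sgn (map (aff x) G) = \<sigma> \<Longrightarrow> map relu (map (aff x) G) = map (aff x) (relu_G \<sigma> G)"
proof (induction G arbitrary: \<sigma>)
  case Nil thus ?case by simp
next
  case (Cons g G)
  then obtain s ss where \<sigma>: "\<sigma> = s # ss" "s = sgn (aff x g)" "map sgn (map (aff x) G) = ss" by auto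
  have "relu (aff x g) = (if s = 1 then aff x g else 0)"
    using \<sigma>(2) by (auto simp: relu_def sgn_if)
  thus ?case using Cons.IH[OF \<sigma>(3)] \<sigma>(1) by (simp add: aff_def)
qed

definition lin_G :: "real list \<times> real \<Rightarrow> ('a::real_inner \<times> real) list \<Rightarrow> 'a \<times> real" where
  "lin_G wc G = (sum_list (map2 (\<lambda>w gb. w *\<^sub>R fst gb) (fst wc) G),
                 sum_list (map2 (\<lambda>w gb. w * snd gb) (fst wc) G) + snd wc)"

lemma sum_map2_aff:
  "sum_list (map2 (*) w (map (aff x) G)) =
     sum_list (map2 (\<lambda>w gb. w *\<^sub>R fst gb) w G) \<bullet> x + sum_list (map2 (\<lambda>w gb. w * snd gb) w G)"
proof (induction w arbitrary: G)
  case Nil thus ?case by simp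
next
  case (Cons w0 w)
  thus ?case by (cases G) (auto simp: aff_def inner_add_left algebra_simps)
qed

lemma neuron_aff: "neuron wc (map (aff x) G) = aff x (lin_G wc G)"
  by (simp add: neuron_def lin_G_def aff_def sum_map2_aff)

lemma layer_aff: "apply_layer H (map (aff x) G) = map (aff x) (map (\<lambda>wc. lin_G wc G) H)"
  by (simp add: apply_layer_def neuron_aff)

fun outG :: "(real list \<times> real) list list \<Rightarrow> real list list \<Rightarrow> ('a::real_inner \<times> real) list
   \<Rightarrow> real list \<times> real \<Rightarrow> 'a \<times> real" where
  "outG [] S G out = lin_G out (relu_G (hd S) G)"
| "outG (H # Hs) S G out = outG Hs (tl S) (map (\<lambda>wc. lin_G wc (relu_G (hd S) G)) H) out"

lemma out_aff:
  "map (map sgn) (map (aff x) G # preacts_from Hs (map (aff x) G)) = S \<Longrightarrow>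
   neuron out (map relu (last (map (aff x) G # preacts_from Hs (map (aff x) G)))) = aff x (outG Hs S G out)"
proof (induction Hs arbitrary: G S)
  case Nil
  thus ?case using relu_G[of x G "hd S"] by (auto simp: neuron_aff)
next
  case (Cons H Hs)
  define G2 where "G2 = map (\<lambda>wc. lin_G wc (relu_G (hd S) G)) H"
  have hs: "hd S = map sgn (map (aff x) G)" using Cons.prems by auto
  have z': "apply_layer H (map relu (map (aff x) G)) = map (aff x) G2"
    unfolding G2_def using relu_G[OF hs[symmetric]] by (simp add: layer_aff)
  have pre: "preacts_from (H # Hs) (map (aff x) G) = map (aff x) G2 # preacts_from Hs (map (aff x) G2)"
    using z' by (simp add: Let_def)
  have tl: "map (map sgn) (map (aff x) G2 # preacts_from Hs (map (aff x) G2)) = tl S"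
    using Cons.prems pre by auto
  show ?case using Cons.IH[OF tl] pre by (simp add: G2_def)
qed

lemma sgn_comb:
  fixes a b t :: real
  assumes "sgn a = sgn b" "0 \<le> t" "t \<le> 1"
  shows "sgn ((1 - t) * a + t * b) = sgn a"
proof -
  consider "a > 0" | "a = 0" | "a < 0" by linarith
  thus ?thesis
  proof cases
    case 1 hence "b > 0" using assms(1) by (metis sgn_pos sgn_greater)
    have "(1 - t) * a \<ge> 0" "t * b \<ge> 0" using 1 \<open>b > 0\<close> assms by auto
    moreover have "(1 - t) * a > 0 \<or> t * b > 0" using 1 \<open>b > 0\<close> assms
      by (cases "t = 1") auto
    ultimately show ?thesis using 1 by auto
  next
    case 2 hence "b = 0" using assms(1) by (simp add: sgn_0_0)
    thus ?thesis using 2 by simp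
  next
    case 3 hence "b < 0" using assms(1) by (metis sgn_neg sgn_less)
    have "(1 - t) * a \<le> 0" "t * b \<le> 0" using 3 \<open>b < 0\<close> assms by (auto simp: mult_nonneg_nonpos)
    moreover have "(1 - t) * a < 0 \<or> t * b < 0" using 3 \<open>b < 0\<close> assms
      by (cases "t = 1") (auto simp: mult_pos_neg)
    ultimately show ?thesis using 3 by auto
  qed
qed

lemma aff_comb: "aff ((1 - t) *\<^sub>R x + t *\<^sub>R y) g = (1 - t) * aff x g + t * aff y g"
  by (simp add: aff_def inner_add_right algebra_simps)

lemma sgn_list_comb:
  assumes "map sgn (map (aff x) G) = map sgn (map (aff y) G)" "0 \<le> t" "t \<le> 1"
  shows "map sgn (map (aff ((1 - t) *\<^sub>R x + t *\<^sub>R y)) G) = map sgn (map (aff x) G)"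
  using assms
proof (induction G)
  case Nil thus ?case by simp
next
  case (Cons g G)
  thus ?case using sgn_comb[of "aff x g" "aff y g" t] by (simp add: aff_comb)
qed

lemma pattern_comb:
  assumes "map (map sgn) (map (aff x) G # preacts_from Hs (map (aff x) G)) = S"
    and "map (map sgn) (map (aff y) G # preacts_from Hs (map (aff y) G)) = S"
    and "0 \<le> t" "t \<le> 1"
  shows "map (map sgn) (map (aff ((1 - t) *\<^sub>R x + t *\<^sub>R y)) G
            # preacts_from Hs (map (aff ((1 - t) *\<^sub>R x + t *\<^sub>R y)) G)) = S"
  using assms(1,2)
proof (induction Hs arbitrary: G S)
  case Nil
  thus ?case using sgn_list_comb[of x G y t] assms(3,4) by auto
next
  case (Cons H Hs)
  let ?w = "(1 - t) *\<^sub>R x + t *\<^sub>R y"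
  define G2 where "G2 = map (\<lambda>wc. lin_G wc (relu_G (hd S) G)) H"
  have hx: "hd S = map sgn (map (aff x) G)" using Cons.prems by auto
  have hy: "hd S = map sgn (map (aff y) G)" using Cons.prems by auto
  have hw: "hd S = map sgn (map (aff ?w) G)" using sgn_list_comb[of x G y t] assms(3,4) hx hy by simp
  have pre: "preacts_from (H # Hs) (map (aff z) G) = map (aff z) G2 # preacts_from Hs (map (aff z) G2)"
    if "hd S = map sgn (map (aff z) G)" for z
    using relu_G[OF that[symmetric]] by (simp add: Let_def layer_aff G2_def)
  have tlx: "map (map sgn) (map (aff x) G2 # preacts_from Hs (map (aff x) G2)) = tl S"
    using Cons.prems(1) pre[OF hx] by auto
  have tly: "map (map sgn) (map (aff y) G2 # preacts_from Hs (map (aff y) G2)) = tl S"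
    using Cons.prems(2) pre[OF hy] by auto
  have "map (map sgn) (map (aff ?w) G2 # preacts_from Hs (map (aff ?w) G2)) = tl S"
    by (rule Cons.IH[OF tlx tly])
  moreover have "S = hd S # tl S" using Cons.prems(1) by auto
  ultimately show ?case using pre[OF hw] hw by (metis list.simps(9))
qed

definition lc :: "('a::topological_space \<Rightarrow> real list) \<Rightarrow> nat \<Rightarrow> bool" where
  "lc z L \<longleftrightarrow> (\<forall>x. length (z x) = L) \<and> (\<forall>i<L. continuous_on UNIV (\<lambda>x. z x ! i))"

lemma lc_relu: "lc z L \<Longrightarrow> lc (\<lambda>x. map relu (z x)) L"
  unfolding lc_def relu_def by (auto intro!: continuous_intros)

lemma sum_list_map2_mult:
  "sum_list (map2 (*) w v) = (\<Sum>i<min (length w) (length v). w ! i * (v ! i :: real))"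
  by (simp add: sum_list_sum_nth atLeast0LessThan)

lemma lc_neuron: "lc z L \<Longrightarrow> continuous_on UNIV (\<lambda>x. neuron wc (z x))"
  unfolding lc_def neuron_def sum_list_map2_mult
  by (auto intro!: continuous_intros)

lemma lc_layer: "lc z L \<Longrightarrow> lc (\<lambda>x. apply_layer H (z x)) (length H)"
proof -
  assume lz: "lc z L"
  have "continuous_on UNIV (\<lambda>x. apply_layer H (z x) ! i)" if "i < length H" for i
  proof -
    have "(\<lambda>x. apply_layer H (z x) ! i) = (\<lambda>x. neuron (H ! i) (z x))"
      using that by (simp add: apply_layer_def)
    thus ?thesis using lc_neuron[OF lz, of "H ! i"] by metis
  qed
  thus ?thesis unfolding lc_def by (simp add: apply_layer_def)
qed

lemma lc_out: "lc z L \<Longrightarrow>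
  continuous_on UNIV (\<lambda>x. neuron out (map relu (last (z x # preacts_from Hs (z x)))))"
proof (induction Hs arbitrary: z L)
  case Nil show ?case using lc_neuron[OF lc_relu[OF Nil.prems]] by simp
next
  case (Cons H Hs)
  have "lc (\<lambda>x. apply_layer H (map relu (z x))) (length H)"
    by (rule lc_layer[OF lc_relu[OF Cons.prems]])
  from Cons.IH[OF this] show ?case by (simp add: Let_def)
qed

lemma lc_first: "lc (first_pre N) (length (fst N))"
  unfolding lc_def first_pre_def
  by (auto simp: case_prod_beta intro!: continuous_intros)

lemma net_cont: "continuous_on UNIV (net_fun N)"
proof -
  have "net_fun N = (\<lambda>x. neuron (snd (snd N)) (map relu (last (first_pre N x # preacts_from (fst (snd N)) (first_pre N x)))))"
    by (auto simp: net_fun_def layer_pres_def)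
  thus ?thesis using lc_out[OF lc_first] by simp
qed


lemma first_pre_aff: "first_pre N x = map (aff x) (fst N)"
  by (simp add: first_pre_def aff_def case_prod_beta)

lemma preacts_len: "map length (preacts_from Hs z) = map length Hs"
  by (induction Hs arbitrary: z) (auto simp: Let_def apply_layer_def)

lemma concat_inj: "map length xs = map length ys \<Longrightarrow> concat xs = concat ys \<Longrightarrow> xs = ys"
proof (induction xs arbitrary: ys)
  case Nil thus ?case by simp
next
  case (Cons x xs) thus ?case by (cases ys) auto
qed

lemma sv_pattern:
  assumes "sign_vector N x = sign_vector N y"
  shows "map (map sgn) (layer_pres N x) = map (map sgn) (layer_pres N y)"
proof (rule concat_inj)
  show "map length (map (map sgn) (layer_pres N x)) = map length (map (map sgn) (layer_pres N y))"
    by (simp add: layer_pres_def preacts_len first_pre_def o_def)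
  show "concat (map (map sgn) (layer_pres N x)) = concat (map (map sgn) (layer_pres N y))"
    using assms by (simp add: sign_vector_def all_pre_def map_concat)
qed

lemma cell_props:
  fixes N :: "'n::finite relu_net"
  assumes "C' \<in> cells N"
  shows "convex C' \<and> (\<exists>g b. \<forall>x\<in>C'. net_fun N x = g \<bullet> x + b)"
proof -
  obtain s where C': "C' = closure {x. sign_vector N x = s}" and ne: "{x. sign_vector N x = s} \<noteq> {}"
    using assms unfolding cells_def by blast
  define R where "R = {x. sign_vector N x = s}"
  obtain x0 where x0: "x0 \<in> R" using ne R_def by blast
  define S where "S = map (map sgn) (layer_pres N x0)"
  let ?Hs = "fst (snd N)"
  have lp: "layer_pres N x = map (aff x) (fst N) # preacts_from ?Hs (map (aff x) (fst N))" for x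
    by (simp add: layer_pres_def first_pre_aff)
  have pat: "map (map sgn) (map (aff x) (fst N) # preacts_from ?Hs (map (aff x) (fst N))) = S"
    if "x \<in> R" for x
    using sv_pattern[of N x x0] that x0 lp unfolding R_def S_def by simp
  have convR: "convex R" unfolding convex_alt
  proof (intro ballI allI impI)
    fix x y and u :: real assume xy: "x \<in> R" "y \<in> R" and u: "0 \<le> u \<and> u \<le> 1"
    have "map (map sgn) (layer_pres N ((1 - u) *\<^sub>R x + u *\<^sub>R y)) = S"
      using pattern_comb[OF pat[OF xy(1)] pat[OF xy(2)]] u lp by simp
    hence "sign_vector N ((1 - u) *\<^sub>R x + u *\<^sub>R y) = sign_vector N x0"
      unfolding S_def by (simp add: sign_vector_def all_pre_def map_concat)
    thus "(1 - u) *\<^sub>R x + u *\<^sub>R y \<in> R" using x0 unfolding R_def by simp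
  qed
  define gb where "gb = outG ?Hs S (fst N) (snd (snd N))"
  have affR: "net_fun N x = fst gb \<bullet> x + snd gb" if "x \<in> R" for x
  proof -
    have "net_fun N x = neuron (snd (snd N)) (map relu (last (map (aff x) (fst N) # preacts_from ?Hs (map (aff x) (fst N)))))"
      unfolding net_fun_def using lp by simp
    also have "\<dots> = aff x gb" unfolding gb_def by (rule out_aff[OF pat[OF that]])
    finally show ?thesis by (simp add: aff_def)
  qed
  have "closed {x. net_fun N x = fst gb \<bullet> x + snd gb}"
    by (rule closed_Collect_eq) (auto intro!: continuous_intros net_cont)
  hence "C' \<subseteq> {x. net_fun N x = fst gb \<bullet> x + snd gb}"
    unfolding C' R_def[symmetric] using affR by (intro closure_minimal) auto
  moreover have "convex C'" using convR C' R_def convex_closure by simp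
  ultimately show ?thesis by blast
qed

theorem mainTheorem17:
  fixes N :: "'n::finite relu_net"
    and C C' D E1 E2 :: "(real^'n) set"
    and v1 v2 :: "real^'n"
  assumes wf: "wf_net N"
    and C_cell: "C \<in> cells N" and C_dim: "aff_dim C = int CARD('n)"
    and C_flat: "flat_on (net_fun N) C"
    and C'_cell: "C' \<in> cells N" and C'_dim: "aff_dim C' = int CARD('n)"
    and D_int: "C \<inter> C' = D"
    and D_face: "D face_of C" "D face_of C'"
    and D_dim: "aff_dim D = int CARD('n) - 1"
    and E1_cell: "E1 \<in> cells N" "aff_dim E1 = 1" "E1 face_of C'"
    and E2_cell: "E2 \<in> cells N" "aff_dim E2 = 1" "E2 face_of C'"
    and E1_notin: "\<not> E1 \<subseteq> C" and E2_notin: "\<not> E2 \<subseteq> C"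
    and v1: "{v1} face_of E1" "v1 \<in> C"
    and v2: "{v2} face_of E2" "v2 \<in> C"
  shows "(points_away (net_fun N) E1 v1 \<and> points_away (net_fun N) E2 v2)
       \<or> (points_toward (net_fun N) E1 v1 \<and> points_toward (net_fun N) E2 v2)
       \<or> (flat_on (net_fun N) E1 \<and> flat_on (net_fun N) E2)"
proof -
  obtain g b where convC': "convex C'" and affF: "\<And>x. x \<in> C' \<Longrightarrow> net_fun N x = g \<bullet> x + b"
    using cell_props[OF C'_cell] by blast
  have dim: "DIM(real^'n) = CARD('n)" by simp
  have v1E: "v1 \<in> E1" using face_of_imp_subset[OF v1(1)] by blast
  have v2E: "v2 \<in> E2" using face_of_imp_subset[OF v2(1)] by blast
  have v1D: "v1 \<in> D" using v1E face_of_imp_subset[OF E1_cell(3)] v1(2) D_int by blast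
  have v2D: "v2 \<in> D" using v2E face_of_imp_subset[OF E2_cell(3)] v2(2) D_int by blast
  have DC: "D \<subseteq> C" using D_int by blast
  have flatD: "\<And>x y. x \<in> D \<Longrightarrow> y \<in> D \<Longrightarrow> net_fun N x = net_fun N y"
    using C_flat DC unfolding flat_on_def by blast
  show ?thesis
    by (rule geo_main[OF convC' affF D_face(2) _ _ DC flatD E1_cell(3,2) E1_notin v1E v1D
          E2_cell(3,2) E2_notin v2E v2D]) (use D_dim C'_dim in simp_all)
qed

end
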